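(* Let $W=\mathfrak{S}_n$, $\ast=\mathrm{id}$, $w\in I_\ast$, and let $(s_{i_1},\dots,s_{i_k},w)$ be a reduced sequence with $k\ge3$ and $i_{k-2}=i_k=i_{k-1}\pm1$. Write $x=s_{i_k}$, $y=s_{i_{k-1}}$. Then exactly one of the following holds: (a) $xw\ne wx$, $yxwx\neq xwxy$, $xyxwxy\neq yxwxyx$, and $yw\neq wy$, $xywy\neq ywyx$, $yxywyx\neq xywyxy$; or (b) $xw\neq wx$, $yxwx\ne xwxy$, $xyxwxy=yxwxyx$, and $yw=wy$, $xyw\neq ywx$, $yxywx\neq xywxy$; or (c) $xw=wx$, $yxw\neq xwy$, $xyxwy\neq yxwyx$, and $yw\neq wy$, $xywy\ne ywyx$, $yxywyx=xywyxy$.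
   Context: $\mathfrak{S}_n$ with $s_i=(i,i+1)$, $S=\{s_1,\dots,s_{n-1}\}$; $I_\ast=\{w\in\mathfrak{S}_n:w^2=1\}$. For $s\in S$, $w\in I_\ast$: $s\ltimes w=sw$ if $sw=ws$, $s\ltimes w=sws$ otherwise; iterated from the right. $\rho(w)$ is the minimal $k$ with $w=s_{i_1}\ltimes\cdots\ltimes s_{i_k}\ltimes 1$. A sequence $(s_{i_1},\dots,s_{i_k},w)$ is reduced if $\rho(s_{i_1}\ltimes\cdots\ltimes s_{i_k}\ltimes w)=\rho(w)+k$. *)

theory Defs
  imports "HOL-Combinatorics.Combinatorics"
begin

text \<open>The symmetric group S_n realised as permutations of {1..n}; the product
  u w is function composition u \<circ> w.\<close>

definition Sym :: "nat \<Rightarrow> (nat \<Rightarrow> nat) set" where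
  "Sym n = {w. w permutes {1..n}}"

definition Inv :: "nat \<Rightarrow> (nat \<Rightarrow> nat) set" where
  "Inv n = {w \<in> Sym n. w \<circ> w = id}"

definition sr :: "nat \<Rightarrow> nat \<Rightarrow> nat" where
  "sr i = transpose i (Suc i)"

definition act :: "(nat \<Rightarrow> nat) \<Rightarrow> (nat \<Rightarrow> nat) \<Rightarrow> (nat \<Rightarrow> nat)" where
  "act s w = (if s \<circ> w = w \<circ> s then s \<circ> w else s \<circ> w \<circ> s)"

text \<open>s_{i_1} \<ltimes> (s_{i_2} \<ltimes> ( ... (s_{i_k} \<ltimes> w))), for the index list [i_1,...,i_k].\<close>
definition act_seq :: "nat list \<Rightarrow> (nat \<Rightarrow> nat) \<Rightarrow> (nat \<Rightarrow> nat)" where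
  "act_seq is w = foldr (\<lambda>i v. act (sr i) v) is w"

definition rho :: "nat \<Rightarrow> (nat \<Rightarrow> nat) \<Rightarrow> nat" where
  "rho n w = (LEAST k. \<exists>is. length is = k \<and> set is \<subseteq> {1..<n} \<and> act_seq is id = w)"

definition reduced_seq :: "nat \<Rightarrow> nat list \<Rightarrow> (nat \<Rightarrow> nat) \<Rightarrow> bool" where
  "reduced_seq n is w \<longleftrightarrow> set is \<subseteq> {1..<n} \<and> w \<in> Inv n \<and>
     rho n (act_seq is w) = rho n w + length is"

end

theory Submission
  imports Defs
begin


definition cmm :: "(nat\<Rightarrow>nat) \<Rightarrow> (nat\<Rightarrow>nat) \<Rightarrow> bool" where "cmm s V \<longleftrightarrow> s \<circ> V = V \<circ> s"

lemma cm: assumes inj: "inj V" shows "cmm (sr i) V \<longleftrightarrow> ((V i = i \<and> V (Suc i) = Suc i) \<or> (V i = Suc i \<and> V (Suc i) = i))"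
  unfolding cmm_def
proof
  assume e: "sr i \<circ> V = V \<circ> sr i"
  have 1: "sr i (V i) = V (Suc i)" using fun_cong[OF e, of i] by (simp add: sr_def)
  have 3: "V i = i \<or> V i = Suc i"
  proof (rule ccontr)
    assume "\<not> (V i = i \<or> V i = Suc i)"
    then have "sr i (V i) = V i" by (simp add: sr_def)
    with 1 have "V i = V (Suc i)" by simp
    with inj show False by (simp add: inj_eq)
  qed
  then show "(V i = i \<and> V (Suc i) = Suc i) \<or> (V i = Suc i \<and> V (Suc i) = i)"
  proof
    assume "V i = i" with 1 show ?thesis by (simp add: sr_def)
  next
    assume "V i = Suc i" with 1 show ?thesis by (simp add: sr_def)
  qed
next
  assume "(V i = i \<and> V (Suc i) = Suc i) \<or> (V i = Suc i \<and> V (Suc i) = i)"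
  then show "sr i \<circ> V = V \<circ> sr i" using inj by (auto simp: sr_def transpose_def fun_eq_iff) (metis inj_eq)+
qed

lemma sr_app: "sr i t = (if t = i then Suc i else if t = Suc i then i else t)"
  by (simp add: sr_def transpose_def)

lemma inj_sr[simp]: "inj (sr i)" by (simp add: sr_def)
lemma inj_cc[simp]: "inj f \<Longrightarrow> inj g \<Longrightarrow> inj (f \<circ> g)" by (simp add: inj_compose)

lemma act_app: "inj w \<Longrightarrow> act (sr i) w t = (if (w i = i \<and> w (Suc i) = Suc i) \<or> (w i = Suc i \<and> w (Suc i) = i)
   then sr i (w t) else sr i (w (sr i t)))"
  using cm[of w i] by (simp add: act_def cmm_def)

lemma local_up:
  fixes w :: "nat \<Rightarrow> nat"
  assumes inj: "inj w" and a: "w i = a" and b: "w (Suc i) = b" and c: "w (Suc (Suc i)) = c"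
    and ab: "a = Suc i \<longleftrightarrow> b = i" and ac: "a = Suc (Suc i) \<longleftrightarrow> c = i" and bc: "b = Suc (Suc i) \<longleftrightarrow> c = Suc i"
    and d: "a \<noteq> b" "a \<noteq> c" "b \<noteq> c"
    and x: "x = sr i" and y: "y = sr (Suc i)"
    and asc1: "w i < w (Suc i)"
    and asc2: "act x w (Suc i) < act x w (Suc (Suc i))"
    and asc3: "act y (act x w) i < act y (act x w) (Suc i)"
  shows "(\<not> cmm x w \<and> \<not> cmm y (x\<circ>w\<circ>x) \<and> \<not> cmm x (y\<circ>x\<circ>w\<circ>x\<circ>y) \<and> \<not> cmm y w \<and> \<not> cmm x (y\<circ>w\<circ>y) \<and> \<not> cmm y (x\<circ>y\<circ>w\<circ>y\<circ>x))
       \<or> (\<not> cmm x w \<and> \<not> cmm y (x\<circ>w\<circ>x) \<and> cmm x (y\<circ>x\<circ>w\<circ>x\<circ>y) \<and> cmm y w \<and> \<not> cmm x (y\<circ>w) \<and> \<not> cmm y (x\<circ>y\<circ>w\<circ>x))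
       \<or> (cmm x w \<and> \<not> cmm y (x\<circ>w) \<and> \<not> cmm x (y\<circ>x\<circ>w\<circ>y) \<and> \<not> cmm y w \<and> \<not> cmm x (y\<circ>w\<circ>y) \<and> cmm y (x\<circ>y\<circ>w\<circ>y\<circ>x))"
proof -
  have ia: "inj (act (sr i) w)" using inj by (simp add: act_def)
  show ?thesis
  apply (insert asc1 asc2 asc3)
  unfolding x y
  apply (atomize (full))
  apply (simp only: cm inj inj_cc inj_sr act_app ia simp_thms o_apply)
  apply (simp add: sr_app)
  apply (simp only: a b c)
  using d ab ac bc le_less_linear[of a i] le_less_linear[of b i] le_less_linear[of c i]
     le_less_linear[of a "Suc (Suc i)"] le_less_linear[of b "Suc (Suc i)"] le_less_linear[of c "Suc (Suc i)"]
  apply (elim disjE; simp)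
  done
qed
lemma local_down:
  fixes w :: "nat \<Rightarrow> nat"
  assumes inj: "inj w" and a: "w i = a" and b: "w (Suc i) = b" and c: "w (Suc (Suc i)) = c"
    and ab: "a = Suc i \<longleftrightarrow> b = i" and ac: "a = Suc (Suc i) \<longleftrightarrow> c = i" and bc: "b = Suc (Suc i) \<longleftrightarrow> c = Suc i"
    and d: "a \<noteq> b" "a \<noteq> c" "b \<noteq> c"
    and x: "x = sr (Suc i)" and y: "y = sr i"
    and asc1: "w (Suc i) < w (Suc (Suc i))"
    and asc2: "act x w i < act x w (Suc i)"
    and asc3: "act y (act x w) (Suc i) < act y (act x w) (Suc (Suc i))"
  shows "(\<not> cmm x w \<and> \<not> cmm y (x\<circ>w\<circ>x) \<and> \<not> cmm x (y\<circ>x\<circ>w\<circ>x\<circ>y) \<and> \<not> cmm y w \<and> \<not> cmm x (y\<circ>w\<circ>y) \<and> \<not> cmm y (x\<circ>y\<circ>w\<circ>y\<circ>x))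
       \<or> (\<not> cmm x w \<and> \<not> cmm y (x\<circ>w\<circ>x) \<and> cmm x (y\<circ>x\<circ>w\<circ>x\<circ>y) \<and> cmm y w \<and> \<not> cmm x (y\<circ>w) \<and> \<not> cmm y (x\<circ>y\<circ>w\<circ>x))
       \<or> (cmm x w \<and> \<not> cmm y (x\<circ>w) \<and> \<not> cmm x (y\<circ>x\<circ>w\<circ>y) \<and> \<not> cmm y w \<and> \<not> cmm x (y\<circ>w\<circ>y) \<and> cmm y (x\<circ>y\<circ>w\<circ>y\<circ>x))"
proof -
  have ia: "inj (act (sr (Suc i)) w)" using inj by (simp add: act_def)
  show ?thesis
  apply (insert asc1 asc2 asc3)
  unfolding x y
  apply (atomize (full))
  apply (simp only: cm inj inj_cc inj_sr act_app ia simp_thms o_apply)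
  apply (simp add: sr_app)
  apply (simp only: a b c)
  using d ab ac bc le_less_linear[of a i] le_less_linear[of b i] le_less_linear[of c i]
     le_less_linear[of a "Suc (Suc i)"] le_less_linear[of b "Suc (Suc i)"] le_less_linear[of c "Suc (Suc i)"]
  apply (elim disjE; simp)
  done
qed




definition NN :: "nat \<Rightarrow> (nat \<Rightarrow> nat) \<Rightarrow> (nat \<times> nat) set" where
  "NN n v = {(p,q). p \<in> {1..n} \<and> q \<in> {1..n} \<and> p < q \<and> v q < v p}"
definition CY :: "nat \<Rightarrow> (nat \<Rightarrow> nat) \<Rightarrow> nat set" where
  "CY n v = {p \<in> {1..n}. p < v p}"
definition FF :: "nat \<Rightarrow> (nat \<Rightarrow> nat) \<Rightarrow> nat" where
  "FF n v = card (NN n v) + card (CY n v)"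

lemma fin_NN[simp]: "finite (NN n v)"
  by (rule finite_subset[of _ "{1..n} \<times> {1..n}"]) (auto simp: NN_def)
lemma fin_CY[simp]: "finite (CY n v)" by (simp add: CY_def)

lemma ord_sr: "a \<noteq> b \<Longrightarrow> \<not> (a = i \<and> b = Suc i) \<Longrightarrow> \<not> (a = Suc i \<and> b = i) \<Longrightarrow>
   (sr i a < sr i b \<longleftrightarrow> a < b)"
  by (auto simp: sr_app)

lemma Inv_D:
  assumes "v \<in> Inv n"
  shows "v permutes {1..n}" "\<And>t. v (v t) = t" "inj v"
proof -
  show p: "v permutes {1..n}" using assms by (simp add: Inv_def Sym_def)
  show "\<And>t. v (v t) = t" using assms by (simp add: Inv_def pointfree_idE)
  show "inj v" using p by (rule permutes_inj)
qed

lemma Inv_in: assumes "v \<in> Inv n" "p \<in> {1..n}" shows "v p \<in> {1..n}"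
  using permutes_in_image[OF Inv_D(1)[OF assms(1)]] assms(2) by simp

lemma sr_in: "i \<in> {1..<n} \<Longrightarrow> p \<in> {1..n} \<Longrightarrow> sr i p \<in> {1..n}"
  by (auto simp: sr_app)

lemma K1:
  assumes i: "i \<in> {1..<n}" and asc: "g i < g (Suc i)"
  shows "card (NN n (g \<circ> sr i)) = card (NN n g) + 1"
proof -
  define \<phi> where "\<phi> = (\<lambda>(p,q). (sr i p, sr i q))"
  have inj: "inj \<phi>" unfolding \<phi>_def inj_def by (auto simp: sr_app split: if_splits)
  have e: "NN n (g \<circ> sr i) = insert (i, Suc i) (\<phi> ` NN n g)"
  proof (rule set_eqI, clarify)
    fix p q
    show "((p,q) \<in> NN n (g \<circ> sr i)) = ((p,q) \<in> insert (i, Suc i) (\<phi> ` NN n g))"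
    proof (cases "(p,q) = (i, Suc i)")
      case True then show ?thesis using i asc by (auto simp: NN_def sr_app)
    next
      case False0: False
      show ?thesis
      proof (cases "(p,q) = (Suc i, i)")
        case True
        have "(p,q) \<notin> NN n (g \<circ> sr i)" using True by (auto simp: NN_def)
        moreover have "(p,q) \<notin> \<phi> ` NN n g"
        proof
          assume "(p,q) \<in> \<phi> ` NN n g"
          then obtain p' q' where "(p',q') \<in> NN n g" "(p,q) = \<phi> (p',q')" by auto
          then show False using True asc by (auto simp: \<phi>_def NN_def sr_app split: if_splits)
        qed
        ultimately show ?thesis using True by simp
      next
      case False
      have "(p,q) \<in> \<phi> ` NN n g \<longleftrightarrow> (sr i p, sr i q) \<in> NN n g"
      proof
        assume "(p,q) \<in> \<phi> ` NN n g"
        then obtain p' q' where "(p',q') \<in> NN n g" "(p,q) = \<phi> (p',q')" by auto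
        then show "(sr i p, sr i q) \<in> NN n g" by (simp add: \<phi>_def sr_def)
      next
        assume "(sr i p, sr i q) \<in> NN n g"
        moreover have "\<phi> (sr i p, sr i q) = (p,q)" by (simp add: \<phi>_def sr_def)
        ultimately show "(p,q) \<in> \<phi> ` NN n g" by (metis image_eqI)
      qed
      moreover have "(p,q) \<in> NN n (g \<circ> sr i) \<longleftrightarrow> (sr i p, sr i q) \<in> NN n g"
      proof -
        have "p \<in> {1..n} \<and> q \<in> {1..n} \<and> p < q \<longleftrightarrow> sr i p \<in> {1..n} \<and> sr i q \<in> {1..n} \<and> sr i p < sr i q"
          using False False0 i asc by (auto simp: sr_app)
        then show ?thesis by (auto simp: NN_def)
      qed
      ultimately show ?thesis using False0 by auto
    qed
    qed
  qed
  have ni: "(i, Suc i) \<notin> \<phi> ` NN n g"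
  proof
    assume "(i, Suc i) \<in> \<phi> ` NN n g"
    then obtain p q where "(p,q) \<in> NN n g" "(i, Suc i) = \<phi> (p,q)" by auto
    then show False by (auto simp: \<phi>_def NN_def sr_app split: if_splits)
  qed
  show ?thesis unfolding e using ni
    by (simp add: card_image inj inj_on_subset[OF inj])
qed

lemma K2:
  assumes v: "v \<in> Inv n" and i: "i \<in> {1..<n}" and asc: "v i < v (Suc i)"
  shows "card (NN n (sr i \<circ> v)) = card (NN n v) + 1"
proof -
  note vv = Inv_D(2)[OF v] and injv = Inv_D(3)[OF v]
  have ii: "i \<in> {1..n}" "Suc i \<in> {1..n}" using i by auto
  have e: "NN n (sr i \<circ> v) = insert (v i, v (Suc i)) (NN n v)"
  proof (rule set_eqI, clarify)
    fix p q
    show "((p,q) \<in> NN n (sr i \<circ> v)) = ((p,q) \<in> insert (v i, v (Suc i)) (NN n v))"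
    proof (cases "(p,q) = (v i, v (Suc i))")
      case True then show ?thesis using asc vv Inv_in[OF v ii(1)] Inv_in[OF v ii(2)]
        by (auto simp: NN_def sr_app)
    next
      case False
      show ?thesis
      proof (cases "p \<in> {1..n} \<and> q \<in> {1..n} \<and> p < q")
        case True
        have "v p \<noteq> v q" using True injv by (metis inj_eq less_irrefl)
        moreover have "\<not> (v q = i \<and> v p = Suc i)"
        proof
          assume "v q = i \<and> v p = Suc i"
          then have "q = v i" "p = v (Suc i)" using vv by metis+
          then show False using True asc by simp
        qed
        moreover have "\<not> (v q = Suc i \<and> v p = i)"
        proof
          assume "v q = Suc i \<and> v p = i"
          then have "q = v (Suc i)" "p = v i" using vv by metis+
          then show False using False by simp
        qed
        ultimately have "sr i (v q) < sr i (v p) \<longleftrightarrow> v q < v p" by (intro ord_sr) auto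
        then show ?thesis using True False by (auto simp: NN_def)
      next
        case F2: False
        then show ?thesis using False by (auto simp: NN_def)
      qed
    qed
  qed
  have "(v i, v (Suc i)) \<notin> NN n v" using vv asc by (auto simp: NN_def)
  then show ?thesis unfolding e by simp
qed

lemma act_Inv:
  assumes v: "v \<in> Inv n" and i: "i \<in> {1..<n}"
  shows "act (sr i) v \<in> Inv n"
proof -
  have sp: "sr i permutes {1..n}" using i unfolding sr_def by (intro permutes_swap_id) auto
  have vp: "v permutes {1..n}" and vv: "v \<circ> v = id" using v by (auto simp: Inv_def Sym_def)
  have ss: "sr i \<circ> sr i = id" by (simp add: sr_def)
  show ?thesis
  proof (cases "sr i \<circ> v = v \<circ> sr i")
    case True
    have "(sr i \<circ> v) \<circ> (sr i \<circ> v) = id"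
      by (metis True comp_assoc comp_id ss vv)
    moreover have "sr i \<circ> v permutes {1..n}" by (rule permutes_compose[OF vp sp])
    ultimately show ?thesis using True unfolding act_def Inv_def Sym_def by simp
  next
    case False
    have "(sr i \<circ> v \<circ> sr i) \<circ> (sr i \<circ> v \<circ> sr i) = id"
      by (metis comp_assoc comp_id ss vv)
    moreover have "sr i \<circ> v \<circ> sr i permutes {1..n}" by (rule permutes_compose[OF sp permutes_compose[OF vp sp]])
    ultimately show ?thesis using False unfolding act_def Inv_def Sym_def by simp
  qed
qed

lemma act_act: "act (sr i) (act (sr i) v) = v"
proof -
  have ss: "sr i \<circ> sr i = id" by (simp add: sr_def)
  show ?thesis
  proof (cases "sr i \<circ> v = v \<circ> sr i")
    case True
    then have a1: "act (sr i) v = sr i \<circ> v" by (simp add: act_def)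
    have c: "sr i \<circ> (sr i \<circ> v) = (sr i \<circ> v) \<circ> sr i" using True by (metis comp_assoc)
    have "sr i \<circ> (sr i \<circ> v) = v" using ss by (metis comp_assoc comp_id id_comp)
    then show ?thesis using c a1 by (simp add: act_def)
  next
    case False
    have nn: "sr i \<circ> (sr i \<circ> v \<circ> sr i) \<noteq> (sr i \<circ> v \<circ> sr i) \<circ> sr i"
    proof
      assume "sr i \<circ> (sr i \<circ> v \<circ> sr i) = (sr i \<circ> v \<circ> sr i) \<circ> sr i"
      moreover have "sr i \<circ> (sr i \<circ> v \<circ> sr i) = v \<circ> sr i" by (metis comp_assoc id_comp ss)
      moreover have "(sr i \<circ> v \<circ> sr i) \<circ> sr i = sr i \<circ> v" by (metis comp_assoc comp_id ss)
      ultimately have "v \<circ> sr i = sr i \<circ> v" by simp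
      then show False using False by simp
    qed
    have a: "act (sr i) v = sr i \<circ> v \<circ> sr i" using False by (simp add: act_def)
    have c: "sr i \<circ> (sr i \<circ> v \<circ> sr i) \<circ> sr i = v" using ss by (metis comp_assoc comp_id id_comp)
    show ?thesis unfolding a by (subst act_def) (simp only: nn c if_False)
  qed
qed


lemma Inv_swap: "v \<in> Inv n \<Longrightarrow> v p = q \<longleftrightarrow> v q = p"
  using Inv_D(2) by metis

lemma F_up:
  assumes v: "v \<in> Inv n" and i: "i \<in> {1..<n}" and asc: "v i < v (Suc i)"
  shows "FF n (act (sr i) v) = FF n v + 2"
proof -
  note vv = Inv_D(2)[OF v] and injv = Inv_D(3)[OF v]
  have ii: "i \<in> {1..n}" "Suc i \<in> {1..n}" using i by auto
  have k2: "card (NN n (sr i \<circ> v)) = card (NN n v) + 1" by (rule K2[OF v i asc])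
  show ?thesis
  proof (cases "sr i \<circ> v = v \<circ> sr i")
    case True
    then have "cmm (sr i) v" by (simp add: cmm_def)
    then have fx: "v i = i" "v (Suc i) = Suc i" using cm[OF injv] asc by auto
    have a: "act (sr i) v = sr i \<circ> v" using True by (simp add: act_def)
    have c: "CY n (sr i \<circ> v) = insert i (CY n v)"
    proof (rule set_eqI)
      fix p
      show "p \<in> CY n (sr i \<circ> v) \<longleftrightarrow> p \<in> insert i (CY n v)"
      proof (cases "p = i \<or> p = Suc i")
        case True then show ?thesis using fx ii by (auto simp: CY_def sr_app)
      next
        case False
        then have "v p \<noteq> i" "v p \<noteq> Suc i" using fx vv by metis+
        then show ?thesis using False by (auto simp: CY_def sr_app)
      qed
    qed
    have "i \<notin> CY n v" using fx by (simp add: CY_def)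
    then show ?thesis using k2 c a by (simp add: FF_def)
  next
    case False
    then have nc: "\<not> (v i = i \<and> v (Suc i) = Suc i)" using cm[OF injv] by (auto simp: cmm_def)
    have a: "act (sr i) v = sr i \<circ> v \<circ> sr i" using False by (simp add: act_def)
    have "v i \<noteq> v (Suc i)" using asc by simp
    then have g: "sr i (v i) < sr i (v (Suc i))" using nc asc by (subst ord_sr) auto
    have k1: "card (NN n (sr i \<circ> v \<circ> sr i)) = card (NN n (sr i \<circ> v)) + 1"
      using K1[OF i, of "sr i \<circ> v"] g by simp
    have c: "CY n (sr i \<circ> v \<circ> sr i) = sr i ` CY n v"
    proof (rule set_eqI)
      fix p
      define q where "q = sr i p"
      have pq: "p = sr i q" by (simp add: q_def sr_app)
      have inv: "sr i (sr i t) = t" for t by (simp add: sr_def)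
      have "p \<in> sr i ` CY n v \<longleftrightarrow> q \<in> CY n v"
      proof
        assume "p \<in> sr i ` CY n v"
        then obtain a where "a \<in> CY n v" "p = sr i a" by auto
        then show "q \<in> CY n v" by (simp add: q_def inv)
      next
        assume "q \<in> CY n v"
        then show "p \<in> sr i ` CY n v" using pq by (rule rev_image_eqI)
      qed
      moreover have "p \<in> {1..n} \<longleftrightarrow> q \<in> {1..n}" using ii by (auto simp: q_def sr_app)
      moreover have "p < sr i (v q) \<longleftrightarrow> q < v q"
      proof (cases "v q = q")
        case True then show ?thesis using pq by simp
      next
        case F: False
        have "\<not> (q = i \<and> v q = Suc i)"
        proof
          assume h: "q = i \<and> v q = Suc i"
          then have b: "v (Suc i) = i" using vv by metis
          from h have a: "v i = Suc i" by metis
          show False using asc a b by simp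
        qed
        moreover have "\<not> (q = Suc i \<and> v q = i)"
        proof
          assume h: "q = Suc i \<and> v q = i"
          then have a: "v i = Suc i" using vv by metis
          from h have b: "v (Suc i) = i" by metis
          show False using asc a b by simp
        qed
        ultimately show ?thesis using F pq ord_sr[of q "v q" i] by auto
      qed
      ultimately show "p \<in> CY n (sr i \<circ> v \<circ> sr i) \<longleftrightarrow> p \<in> sr i ` CY n v"
        by (simp add: CY_def q_def) blast
    qed
    have "card (CY n (sr i \<circ> v \<circ> sr i)) = card (CY n v)"
      unfolding c by (rule card_image, rule inj_on_subset[of "sr i" UNIV]) (simp_all add: sr_def)
    then show ?thesis using k1 k2 a by (simp add: FF_def)
  qed
qed

lemma F_down:
  assumes v: "v \<in> Inv n" and i: "i \<in> {1..<n}" and des: "v (Suc i) < v i"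
  shows "FF n (act (sr i) v) + 2 = FF n v"
proof -
  note vv = Inv_D(2)[OF v] and injv = Inv_D(3)[OF v]
  define u where "u = act (sr i) v"
  have uI: "u \<in> Inv n" using act_Inv[OF v i] by (simp add: u_def)
  have "u i < u (Suc i)"
  proof (cases "sr i \<circ> v = v \<circ> sr i")
    case True
    then have "cmm (sr i) v" by (simp add: cmm_def)
    then have sw: "v i = Suc i" "v (Suc i) = i" using cm[OF injv] des by auto
    have "u = sr i \<circ> v" using True by (simp add: u_def act_def)
    then show ?thesis using sw by (simp add: sr_app)
  next
    case False
    then have nc: "\<not> (v i = Suc i \<and> v (Suc i) = i)" using cm[OF injv] by (auto simp: cmm_def)
    have "u = sr i \<circ> v \<circ> sr i" using False by (simp add: u_def act_def)
    then have "u i = sr i (v (Suc i))" "u (Suc i) = sr i (v i)" by (simp_all add: sr_app)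
    moreover have "v (Suc i) \<noteq> v i" using des by simp
    ultimately show ?thesis using nc des ord_sr[of "v (Suc i)" "v i" i] by auto
  qed
  from F_up[OF uI i this] have "FF n (act (sr i) u) = FF n u + 2" .
  then show ?thesis by (simp add: u_def act_act)
qed

lemma F_step:
  assumes v: "v \<in> Inv n" and i: "i \<in> {1..<n}"
  shows "FF n (act (sr i) v) \<le> FF n v + 2"
proof -
  have "v i \<noteq> v (Suc i)" using Inv_D(3)[OF v] by (simp add: inj_eq)
  then show ?thesis using F_up[OF v i] F_down[OF v i] by (cases "v i < v (Suc i)") auto
qed

lemma asc_of_F:
  assumes v: "v \<in> Inv n" and i: "i \<in> {1..<n}" and e: "FF n (act (sr i) v) = FF n v + 2"
  shows "v i < v (Suc i)"
proof (rule ccontr)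
  assume "\<not> v i < v (Suc i)"
  moreover have "v i \<noteq> v (Suc i)" using Inv_D(3)[OF v] by (simp add: inj_eq)
  ultimately have "v (Suc i) < v i" by simp
  from F_down[OF v i this] e show False by simp
qed

lemma act_seq_Cons[simp]: "act_seq (i # js) w = act (sr i) (act_seq js w)"
  by (simp add: act_seq_def)
lemma act_seq_Nil[simp]: "act_seq [] w = w"
  by (simp add: act_seq_def)
lemma act_seq_append: "act_seq (xs @ ys) w = act_seq xs (act_seq ys w)"
  by (simp add: act_seq_def)

lemma seq_Inv: "set js \<subseteq> {1..<n} \<Longrightarrow> w \<in> Inv n \<Longrightarrow> act_seq js w \<in> Inv n"
  by (induction js) (auto intro: act_Inv)

lemma seq_F: "set js \<subseteq> {1..<n} \<Longrightarrow> w \<in> Inv n \<Longrightarrow> FF n (act_seq js w) \<le> FF n w + 2 * length js"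
proof (induction js)
  case Nil then show ?case by simp
next
  case (Cons j js)
  then have "act_seq js w \<in> Inv n" "j \<in> {1..<n}" using seq_Inv[of js n w] by auto
  from F_step[OF this] Cons show ?case by simp
qed

lemma id_Inv: "id \<in> Inv n" by (simp add: Inv_def Sym_def permutes_id)
lemma FF_id: "FF n id = 0"
proof -
  have "NN n id = {}" "CY n id = {}" by (auto simp: NN_def CY_def)
  then show ?thesis by (simp add: FF_def)
qed

lemma mono_id:
  assumes v: "v \<in> Inv n" and m: "\<forall>i\<in>{1..<n}. v i < v (Suc i)"
  shows "v = id"
proof -
  have lo: "p \<le> v p" if "1 \<le> p" "p \<le> n" for p
    using that
  proof (induction p)
    case 0 then show ?case by simp
  next
    case (Suc p)
    show ?case
    proof (cases "p = 0")
      case True then show ?thesis using Inv_in[OF v, of 1] Suc by auto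
    next
      case False
      then have "p \<le> v p" using Suc by auto
      moreover have "v p < v (Suc p)" using m False Suc by auto
      ultimately show ?thesis by simp
    qed
  qed
  have hi: "v (n - t) \<le> n - t" if "t < n" for t
    using that
  proof (induction t)
    case 0 then show ?case using Inv_in[OF v, of n] by auto
  next
    case (Suc t)
    have "v (n - Suc t) < v (Suc (n - Suc t))" using m Suc by auto
    moreover have "Suc (n - Suc t) = n - t" using Suc by auto
    ultimately show ?case using Suc by auto
  qed
  show ?thesis
  proof
    fix p
    show "v p = id p"
    proof (cases "p \<in> {1..n}")
      case True
      then have "v p \<le> p" using hi[of "n - p"] by auto
      then show ?thesis using lo True by (simp add: le_antisym)
    next
      case False
      then show ?thesis using Inv_D(1)[OF v] by (simp add: permutes_not_in)
    qed
  qed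
qed

lemma descent:
  assumes v: "v \<in> Inv n" and ne: "v \<noteq> id"
  shows "\<exists>i\<in>{1..<n}. v (Suc i) < v i"
proof (rule ccontr)
  assume "\<not> ?thesis"
  then have "\<forall>i\<in>{1..<n}. v i < v (Suc i)"
    using Inv_D(3)[OF v] by (metis inj_eq linorder_neqE_nat n_not_Suc_n)
  with mono_id[OF v] ne show False by simp
qed

lemma ex_path:
  "\<forall>v. v \<in> Inv n \<longrightarrow> FF n v = m \<longrightarrow> (\<exists>js. 2 * length js = FF n v \<and> set js \<subseteq> {1..<n} \<and> act_seq js id = v)"
proof (induction m rule: less_induct)
  case (less m)
  show ?case
  proof (intro allI impI)
    fix v assume v: "v \<in> Inv n" and fm: "FF n v = m"
    show "\<exists>js. 2 * length js = FF n v \<and> set js \<subseteq> {1..<n} \<and> act_seq js id = v"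
    proof (cases "v = id")
      case True then show ?thesis by (intro exI[of _ "[]"]) (simp add: FF_id)
    next
      case False
      then obtain i where i: "i \<in> {1..<n}" "v (Suc i) < v i" using descent[OF v] by blast
      define u where "u = act (sr i) v"
      have uI: "u \<in> Inv n" using act_Inv[OF v i(1)] by (simp add: u_def)
      have fu: "FF n u + 2 = FF n v" using F_down[OF v i] by (simp add: u_def)
      have "FF n u < m" using fu fm by simp
      from less.IH[OF this] uI have "\<exists>js. 2 * length js = FF n u \<and> set js \<subseteq> {1..<n} \<and> act_seq js id = u"
        by blast
      then obtain js where js: "2 * length js = FF n u" "set js \<subseteq> {1..<n}" "act_seq js id = u"
        by blast
      show ?thesis
        using js fu i by (intro exI[of _ "i # js"]) (simp add: u_def act_act)
    qed
  qed
qed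

lemma rho_F:
  assumes v: "v \<in> Inv n"
  shows "2 * rho n v = FF n v"
proof -
  obtain js where js: "2 * length js = FF n v" "set js \<subseteq> {1..<n}" "act_seq js id = v"
    using ex_path[of n "FF n v"] v by blast
  have "rho n v = length js"
    unfolding rho_def
  proof (rule Least_equality)
    show "\<exists>is. length is = length js \<and> set is \<subseteq> {1..<n} \<and> act_seq is id = v" using js by blast
  next
    fix k assume "\<exists>is. length is = k \<and> set is \<subseteq> {1..<n} \<and> act_seq is id = v"
    then obtain is' where "length is' = k" "set is' \<subseteq> {1..<n}" "act_seq is' id = v" by blast
    then have "FF n v \<le> 2 * k" using seq_F[of is' n id] id_Inv FF_id by auto
    then show "length js \<le> k" using js by simp
  qed
  then show ?thesis using js by simp
qed

theorem corollary2p14: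
  fixes n :: nat and w :: "nat \<Rightarrow> nat" and "is" :: "nat list"
  defines "k \<equiv> length is"
  defines "x \<equiv> sr (is ! (k - 1))"
  defines "y \<equiv> sr (is ! (k - 2))"
  assumes w: "w \<in> Inv n"
    and red: "reduced_seq n is w"
    and k3: "k \<ge> 3"
    and idx1: "is ! (k - 3) = is ! (k - 1)"
    and idx2: "is ! (k - 2) = is ! (k - 1) + 1 \<or> is ! (k - 2) + 1 = is ! (k - 1)"
  defines "A \<equiv> x \<circ> w \<noteq> w \<circ> x \<and> y \<circ> x \<circ> w \<circ> x \<noteq> x \<circ> w \<circ> x \<circ> y \<and>
               x \<circ> y \<circ> x \<circ> w \<circ> x \<circ> y \<noteq> y \<circ> x \<circ> w \<circ> x \<circ> y \<circ> x \<and>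
               y \<circ> w \<noteq> w \<circ> y \<and> x \<circ> y \<circ> w \<circ> y \<noteq> y \<circ> w \<circ> y \<circ> x \<and>
               y \<circ> x \<circ> y \<circ> w \<circ> y \<circ> x \<noteq> x \<circ> y \<circ> w \<circ> y \<circ> x \<circ> y"
  defines "B \<equiv> x \<circ> w \<noteq> w \<circ> x \<and> y \<circ> x \<circ> w \<circ> x \<noteq> x \<circ> w \<circ> x \<circ> y \<and>
               x \<circ> y \<circ> x \<circ> w \<circ> x \<circ> y = y \<circ> x \<circ> w \<circ> x \<circ> y \<circ> x \<and>
               y \<circ> w = w \<circ> y \<and> x \<circ> y \<circ> w \<noteq> y \<circ> w \<circ> x \<and>
               y \<circ> x \<circ> y \<circ> w \<circ> x \<noteq> x \<circ> y \<circ> w \<circ> x \<circ> y"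
  defines "C \<equiv> x \<circ> w = w \<circ> x \<and> y \<circ> x \<circ> w \<noteq> x \<circ> w \<circ> y \<and>
               x \<circ> y \<circ> x \<circ> w \<circ> y \<noteq> y \<circ> x \<circ> w \<circ> y \<circ> x \<and>
               y \<circ> w \<noteq> w \<circ> y \<and> x \<circ> y \<circ> w \<circ> y \<noteq> y \<circ> w \<circ> y \<circ> x \<and>
               y \<circ> x \<circ> y \<circ> w \<circ> y \<circ> x = x \<circ> y \<circ> w \<circ> y \<circ> x \<circ> y"
  shows "(A \<and> \<not> B \<and> \<not> C) \<or> (\<not> A \<and> B \<and> \<not> C) \<or> (\<not> A \<and> \<not> B \<and> C)"
proof -
  have sis: "set is \<subseteq> {1..<n}" and rr: "rho n (act_seq is w) = rho n w + k"
    using red by (auto simp: reduced_seq_def k_def)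
  define V where "V m = act_seq (drop m is) w" for m
  have VI: "V m \<in> Inv n" for m
    unfolding V_def by (rule seq_Inv[OF _ w]) (meson set_drop_subset sis subset_trans)
  have FV0: "FF n (V 0) = FF n w + 2 * k"
    using rho_F[OF VI[of 0]] rho_F[OF w] rr by (simp add: V_def)
  have FVm: "FF n (V m) = FF n w + 2 * (k - m)" if "m \<le> k" for m
  proof -
    have "V 0 = act_seq (take m is) (V m)"
      by (simp add: V_def act_seq_append[symmetric])
    moreover have st: "set (take m is) \<subseteq> {1..<n}" using sis by (meson set_take_subset subset_trans)
    moreover have "length (take m is) = m" using that by (simp add: k_def)
    ultimately have "FF n (V 0) \<le> FF n (V m) + 2 * m"
      using seq_F[OF st VI[of m]] by simp
    moreover have "FF n (V m) \<le> FF n w + 2 * (k - m)"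
      using seq_F[of "drop m is" n w] w sis unfolding V_def k_def
      by (metis length_drop set_drop_subset subset_trans)
    ultimately show ?thesis using FV0 that by linarith
  qed
  have Vs: "V m = act (sr (is ! m)) (V (Suc m))" if "m < k" for m
    using that by (simp add: V_def k_def Cons_nth_drop_Suc[symmetric])
  have idxin: "is ! m \<in> {1..<n}" if "m < k" for m
    using that sis nth_mem k_def by blast
  have asc: "V (Suc m) (is ! m) < V (Suc m) (Suc (is ! m))" if "m < k" for m
  proof (rule asc_of_F[OF VI idxin[OF that]])
    show "FF n (act (sr (is ! m)) (V (Suc m))) = FF n (V (Suc m)) + 2"
      using FVm[of m] FVm[of "Suc m"] that Vs[OF that] by simp
  qed
  define i0 where "i0 = is ! (k - 1)"
  define j0 where "j0 = is ! (k - 2)"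
  have Vk: "V k = w" by (simp add: V_def k_def)
  have e1: "Suc (k - 1) = k" "Suc (k - 2) = k - 1" "Suc (k - 3) = k - 2" using k3 by auto
  have a1: "w i0 < w (Suc i0)" using asc[of "k - 1"] k3 e1 Vk by (simp add: i0_def)
  have V1: "V (k - 1) = act (sr i0) w" using Vs[of "k - 1"] k3 e1 Vk by (simp add: i0_def)
  have a2: "act (sr i0) w j0 < act (sr i0) w (Suc j0)" using asc[of "k - 2"] k3 e1 V1 by (simp add: j0_def)
  have V2: "V (k - 2) = act (sr j0) (act (sr i0) w)" using Vs[of "k - 2"] k3 e1 V1 by (simp add: j0_def)
  have a3: "act (sr j0) (act (sr i0) w) i0 < act (sr j0) (act (sr i0) w) (Suc i0)"
    using asc[of "k - 3"] k3 e1 V2 idx1 by (simp add: i0_def)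
  note vv = Inv_D(2)[OF w] and injw = Inv_D(3)[OF w]
  have sw: "w p = q \<longleftrightarrow> w q = p" for p q using vv by metis
  have dw: "p \<noteq> q \<Longrightarrow> w p \<noteq> w q" for p q using injw by (simp add: inj_eq)
  have xd: "x = sr i0" and yd: "y = sr j0" by (simp_all add: x_def y_def i0_def j0_def)
  have L: "(\<not> cmm x w \<and> \<not> cmm y (x\<circ>w\<circ>x) \<and> \<not> cmm x (y\<circ>x\<circ>w\<circ>x\<circ>y) \<and> \<not> cmm y w \<and> \<not> cmm x (y\<circ>w\<circ>y) \<and> \<not> cmm y (x\<circ>y\<circ>w\<circ>y\<circ>x))
       \<or> (\<not> cmm x w \<and> \<not> cmm y (x\<circ>w\<circ>x) \<and> cmm x (y\<circ>x\<circ>w\<circ>x\<circ>y) \<and> cmm y w \<and> \<not> cmm x (y\<circ>w) \<and> \<not> cmm y (x\<circ>y\<circ>w\<circ>x))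
       \<or> (cmm x w \<and> \<not> cmm y (x\<circ>w) \<and> \<not> cmm x (y\<circ>x\<circ>w\<circ>y) \<and> \<not> cmm y w \<and> \<not> cmm x (y\<circ>w\<circ>y) \<and> cmm y (x\<circ>y\<circ>w\<circ>y\<circ>x))"
  proof (cases "j0 = Suc i0")
    case True
    show ?thesis
      by (rule local_up[where w=w and i=i0 and a="w i0" and b="w (Suc i0)" and c="w (Suc (Suc i0))"])
         (use True xd yd a1 a2 a3 injw sw[of i0 "Suc i0"] sw[of i0 "Suc (Suc i0)"] sw[of "Suc i0" "Suc (Suc i0)"]
           dw[of i0 "Suc i0"] dw[of i0 "Suc (Suc i0)"] dw[of "Suc i0" "Suc (Suc i0)"] in auto)
  next
    case False
    then have ij: "i0 = Suc j0" using idx2 by (auto simp: i0_def j0_def)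
    show ?thesis
      by (rule local_down[where w=w and i=j0 and a="w j0" and b="w (Suc j0)" and c="w (Suc (Suc j0))"])
         (use ij xd yd a1 a2 a3 injw sw[of j0 "Suc j0"] sw[of j0 "Suc (Suc j0)"] sw[of "Suc j0" "Suc (Suc j0)"]
           dw[of j0 "Suc j0"] dw[of j0 "Suc (Suc j0)"] dw[of "Suc j0" "Suc (Suc j0)"] in auto)
  qed
  have AA: "A = (\<not> cmm x w \<and> \<not> cmm y (x\<circ>w\<circ>x) \<and> \<not> cmm x (y\<circ>x\<circ>w\<circ>x\<circ>y) \<and> \<not> cmm y w \<and> \<not> cmm x (y\<circ>w\<circ>y) \<and> \<not> cmm y (x\<circ>y\<circ>w\<circ>y\<circ>x))"
    unfolding A_def cmm_def by (simp only: comp_assoc)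
  have BB: "B = (\<not> cmm x w \<and> \<not> cmm y (x\<circ>w\<circ>x) \<and> cmm x (y\<circ>x\<circ>w\<circ>x\<circ>y) \<and> cmm y w \<and> \<not> cmm x (y\<circ>w) \<and> \<not> cmm y (x\<circ>y\<circ>w\<circ>x))"
    unfolding B_def cmm_def by (simp only: comp_assoc)
  have CC: "C = (cmm x w \<and> \<not> cmm y (x\<circ>w) \<and> \<not> cmm x (y\<circ>x\<circ>w\<circ>y) \<and> \<not> cmm y w \<and> \<not> cmm x (y\<circ>w\<circ>y) \<and> cmm y (x\<circ>y\<circ>w\<circ>y\<circ>x))"
    unfolding C_def cmm_def by (simp only: comp_assoc)
  show ?thesis using L unfolding AA BB CC by blast
qed

end
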